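(* Let $d\ge 1$, $T\ge 1$, let $\mathcal{X}\subseteq\mathbb{R}^d$ be a non-empty closed convex set, and let $0<\mu\le L$. Let $f_1,\dots,f_T:\mathcal{X}\to[0,\infty)$ be differentiable with $\frac{\mu}{2}\|y-x\|^2\le f_t(y)-f_t(x)-\langle\nabla f_t(x),y-x\rangle\le\frac{L}{2}\|y-x\|^2$ for all $t$ and $x,y\in\mathcal{X}$. Let $C_{\mathcal{A}_o}$ be the quadratic-switching cost of the OMGD algorithm with $K=\lceil\frac{L+\mu}{2\mu}\ln4\rceil$ from a starting point $x_0\in\mathcal{X}$. Then for any $\alpha>0$, $$C_{\mathcal{A}_o}\le\sum_{t=1}^T f_t(x_t^\star)+\frac{1}{2\alpha}\sum_{t=1}^T\|\nabla f_t(x_t^\star)\|^2+(L+\alpha+5)\big(\|x_1-x_1^\star\|^2+2\mathcal{P}_{2,T}^\star\big),$$ where $x_1$ is the first OMGD iterate.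
   Context: $x_t^\star=\arg\min_{x\in\mathcal{X}}f_t(x)$ and $\mathcal{P}_{2,T}^\star=\sum_{t=2}^T\|x_t^\star-x_{t-1}^\star\|^2$. OMGD with parameter $K$: $x_1=x_0$; for $t=2,\dots,T$, $z_t^{(0)}=x_{t-1}$, $z_t^{(k)}=\Pi_{\mathcal{X}}\big(z_t^{(k-1)}-\frac1L\nabla f_{t-1}(z_t^{(k-1)})\big)$ ($k=1,\dots,K$), $x_t=z_t^{(K)}$, where $\Pi_{\mathcal{X}}$ is Euclidean projection onto $\mathcal{X}$. $C_{\mathcal{A}_o}=\sum_{t=1}^T\big(f_t(x_t)+\frac12\|x_t-x_{t-1}\|^2\big)$. *)

theory Defs
  imports "HOL-Analysis.Analysis"
begin

text \<open>One inner gradient step of OMGD at round t+1 (uses the gradient of f_t):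
  z \<mapsto> \<Pi>_X(z - (1/L) grad f_t(z)).\<close>
definition omgd_step :: "'a::euclidean_space set \<Rightarrow> real \<Rightarrow> (nat \<Rightarrow> 'a \<Rightarrow> 'a) \<Rightarrow> nat \<Rightarrow> 'a \<Rightarrow> 'a" where
  "omgd_step X L g t z = closest_point X (z - (1 / L) *\<^sub>R g t z)"

primrec omgd :: "'a::euclidean_space set \<Rightarrow> real \<Rightarrow> (nat \<Rightarrow> 'a \<Rightarrow> 'a) \<Rightarrow> nat \<Rightarrow> 'a \<Rightarrow> nat \<Rightarrow> 'a" where
  "omgd X L g K x0 0 = x0"
| "omgd X L g K x0 (Suc t) =
     (if t = 0 then x0 else (omgd_step X L g t ^^ K) (omgd X L g K x0 t))"

definition omgd_cost :: "'a::euclidean_space set \<Rightarrow> real \<Rightarrow> (nat \<Rightarrow> 'a \<Rightarrow> real) \<Rightarrow> (nat \<Rightarrow> 'a \<Rightarrow> 'a) \<Rightarrow> nat \<Rightarrow> 'a \<Rightarrow> nat \<Rightarrow> real" where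
  "omgd_cost X L f g K x0 T =
     (\<Sum>t=1..T. f t (omgd X L g K x0 t)
        + (1/2) * (norm (omgd X L g K x0 t - omgd X L g K x0 (t - 1)))\<^sup>2)"

end

theory Submission
  imports Defs
begin

lemma opt_vi:
  fixes X :: "'a::euclidean_space set" and f :: "'a \<Rightarrow> real" and g :: "'a \<Rightarrow> 'a"
  assumes "convex X" "0 < L" "xs \<in> X" "y \<in> X"
    and min: "\<And>y. y \<in> X \<Longrightarrow> f xs \<le> f y"
    and sm: "\<And>y. y \<in> X \<Longrightarrow> f y - f xs - g xs \<bullet> (y - xs) \<le> L/2 * (norm (y - xs))^2"
  shows "0 \<le> g xs \<bullet> (y - xs)"
proof (rule ccontr)
  assume "\<not> ?thesis"
  hence c0: "g xs \<bullet> (y - xs) < 0" by simp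
  define d where "d = y - xs"
  define c where "c = g xs \<bullet> d"
  define nd where "nd = (norm d)^2"
  have "d \<noteq> 0" using c0 d_def by auto
  hence nd: "nd > 0" by (simp add: nd_def)
  have cneg: "c < 0" using c0 by (simp add: c_def d_def)
  define s where "s = min 1 (- c / (L * nd))"
  have Lnd: "L * nd > 0" using nd assms(2) by simp
  have s0: "0 < s" using Lnd cneg by (simp add: s_def divide_neg_pos)
  have s1: "s \<le> 1" by (simp add: s_def)
  have "s \<le> (- c) / (L * nd)" unfolding s_def by (rule min.cobounded2)
  hence "s * (L*nd) \<le> (- c) / (L * nd) * (L*nd)" using Lnd by (rule mult_right_mono[OF _ less_imp_le])
  moreover have "(- c) / (L * nd) * (L*nd) = - c" using Lnd by (simp, auto)
  ultimately have s2: "s * (L*nd) \<le> -c" by simp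
  define z where "z = (1 - s) *\<^sub>R xs + s *\<^sub>R y"
  have zX: "z \<in> X" using assms(1,3,4) s0 s1 unfolding z_def by (simp add: convex_alt)
  have zd: "z - xs = s *\<^sub>R d" by (simp add: z_def d_def algebra_simps)
  have "f z - f xs - g xs \<bullet> (z - xs) \<le> L/2 * (norm (z - xs))^2" using sm zX by blast
  hence "f z - f xs - s * c \<le> L/2 * s^2 * nd"
    using s0 by (simp add: zd c_def nd_def power_mult_distrib)
  moreover have "f xs \<le> f z" using min zX by blast
  ultimately have "0 \<le> s * (c + L/2 * s * nd)" by (simp add: algebra_simps power2_eq_square)
  hence "0 \<le> c + L/2 * s * nd" using s0 by (simp add: zero_le_mult_iff)
  with s2 cneg show False by (simp add: algebra_simps)
qed

lemma step_contract:
  fixes X :: "'a::euclidean_space set" and f :: "'a \<Rightarrow> real" and g :: "'a \<Rightarrow> 'a"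
  assumes "X \<noteq> {}" "closed X" "convex X" "0 < \<mu>" "\<mu> \<le> L" "xs \<in> X" "z \<in> X"
    and min: "\<And>y. y \<in> X \<Longrightarrow> f xs \<le> f y"
    and sc: "\<And>x y. x \<in> X \<Longrightarrow> y \<in> X \<Longrightarrow> \<mu> / 2 * (norm (y - x))\<^sup>2 \<le> f y - f x - g x \<bullet> (y - x)"
    and sm: "\<And>x y. x \<in> X \<Longrightarrow> y \<in> X \<Longrightarrow> f y - f x - g x \<bullet> (y - x) \<le> L / 2 * (norm (y - x))\<^sup>2"
  shows "closest_point X (z - (1/L) *\<^sub>R g z) \<in> X"
    and "(norm (closest_point X (z - (1/L) *\<^sub>R g z) - xs))\<^sup>2 \<le> (L - \<mu>) / (L + \<mu>) * (norm (z - xs))\<^sup>2"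
proof -
  define p where "p = closest_point X (z - (1/L) *\<^sub>R g z)"
  have L0: "L > 0" using assms by simp
  have pX: "p \<in> X" unfolding p_def using assms(1,2) by (simp add: closest_point_in_set)
  then show "closest_point X (z - (1/L) *\<^sub>R g z) \<in> X" by (simp add: p_def)
  have P: "((z - (1/L) *\<^sub>R g z) - p) \<bullet> (xs - p) \<le> 0"
    unfolding p_def
    by (rule any_closest_point_dot[OF assms(3,2) closest_point_in_set[OF assms(2,1)] assms(6)])
      (use closest_point_le[OF assms(2)] in blast)
  have vi: "0 \<le> g xs \<bullet> (p - xs)"
    by (rule opt_vi[where f=f, OF assms(3) L0 assms(6) pX]) (use min sm assms(6) in auto)
  define a where "a = z - xs"
  define b where "b = p - xs"
  define na where "na = a \<bullet> a"
  define nb where "nb = b \<bullet> b"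
  define ab where "ab = a \<bullet> b"
  define gb where "gb = g z \<bullet> b"
  define ga where "ga = g z \<bullet> a"
  have e: "(z - (1/L) *\<^sub>R g z - p) \<bullet> (xs - p) = - ab + (1/L) * gb + nb"
    by (simp add: a_def b_def ab_def gb_def nb_def inner_diff_left inner_diff_right inner_commute algebra_simps)
  have P': "- ab + (1/L) * gb + nb \<le> 0" using P e by linarith
  have "L * (- ab + (1/L) * gb + nb) \<le> 0" using P' L0 by (simp add: mult_nonneg_nonpos)
  hence P2: "L * nb - L * ab + gb \<le> 0" using L0 by (simp add: algebra_simps)
  have SM: "f p - f z - g z \<bullet> (p - z) \<le> L / 2 * (norm (p - z))\<^sup>2" using sm assms(7) pX by blast
  have SC1: "\<mu> / 2 * (norm (xs - z))\<^sup>2 \<le> f xs - f z - g z \<bullet> (xs - z)" using sc assms(6,7) by blast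
  have SC2: "\<mu> / 2 * (norm (p - xs))\<^sup>2 \<le> f p - f xs - g xs \<bullet> (p - xs)" using sc assms(6) pX by blast
  have e1: "p - z = b - a" "xs - z = - a" "p - xs = b" by (auto simp: a_def b_def)
  have n1: "(norm (b - a))\<^sup>2 = nb - 2 * ab + na"
    by (simp add: power2_norm_eq_inner inner_diff_left inner_diff_right nb_def na_def ab_def inner_commute)
  have SM': "f p - f z - (gb - ga) \<le> L / 2 * (nb - 2 * ab + na)"
    using SM unfolding e1 n1 by (simp add: inner_diff_right gb_def ga_def)
  have SC1': "\<mu> / 2 * na \<le> f xs - f z + ga"
    using SC1 unfolding e1 by (simp add: power2_norm_eq_inner na_def ga_def)
  have SC2': "\<mu> / 2 * nb \<le> f p - f xs"
    using SC2 vi unfolding e1 by (simp add: power2_norm_eq_inner nb_def)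
  have Q: "\<mu> * (na + nb) \<le> 2 * gb + L * (nb - 2 * ab + na)"
    using SM' SC1' SC2' by (simp add: algebra_simps)
  have "(L + \<mu>) * nb \<le> (L - \<mu>) * na"
    using Q P2 by (simp add: algebra_simps)
  hence "nb \<le> (L - \<mu>) / (L + \<mu>) * na"
    using assms(4,5) by (simp add: field_simps)
  then show "(norm (closest_point X (z - (1/L) *\<^sub>R g z) - xs))\<^sup>2 \<le> (L - \<mu>) / (L + \<mu>) * (norm (z - xs))\<^sup>2"
    by (simp add: p_def[symmetric] power2_norm_eq_inner nb_def na_def a_def b_def)
qed


lemma qK:
  fixes \<mu> L :: real
  assumes "0 < \<mu>" "\<mu> \<le> L"
  shows "((L - \<mu>) / (L + \<mu>)) ^ (nat \<lceil>(L + \<mu>) / (2 * \<mu>) * ln 4\<rceil>) \<le> 1/4"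
proof -
  define r where "r = (L + \<mu>) / (2 * \<mu>) * ln 4"
  define K where "K = nat \<lceil>r\<rceil>"
  define q where "q = (L - \<mu>) / (L + \<mu>)"
  have ln4: "ln (4::real) > 0" by simp
  have r0: "r > 0" unfolding r_def using assms ln4 by simp
  have Kr: "real K \<ge> r" unfolding K_def by linarith
  have K0: "K > 0" using Kr r0 by (cases K) auto
  have q0: "q \<ge> 0" unfolding q_def using assms by simp
  have q1: "q - 1 = - (2 * \<mu>) / (L + \<mu>)" unfolding q_def using assms by (simp add: field_simps)
  show ?thesis
  proof (cases "q = 0")
    case True
    then show ?thesis using K0 unfolding q_def[symmetric] K_def[symmetric] r_def[symmetric] by (simp add: power_0_left)
  next
    case False
    hence qp: "q > 0" using q0 by simp
    have "ln q \<le> q - 1" using qp by (rule ln_le_minus_one)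
    hence "real K * ln q \<le> real K * (- (2 * \<mu>) / (L + \<mu>))" unfolding q1 by (rule mult_left_mono) simp
    also have "\<dots> \<le> r * (- (2 * \<mu>) / (L + \<mu>))"
      using Kr assms by (intro mult_right_mono_neg) auto
    also have "\<dots> = - ln 4"
    proof -
      have "L + \<mu> \<noteq> 0" "\<mu> \<noteq> 0" using assms by auto
      hence "(L + \<mu>) / (2 * \<mu>) * ((2 * \<mu>) / (L + \<mu>)) = 1" by simp
      have "r * (- (2 * \<mu>) / (L + \<mu>)) = - (((L + \<mu>) / (2 * \<mu>) * ((2 * \<mu>) / (L + \<mu>))) * ln 4)"
        unfolding r_def by (simp only: minus_divide_left mult_minus_right mult_ac)
      thus ?thesis using \<open>(L + \<mu>) / (2 * \<mu>) * ((2 * \<mu>) / (L + \<mu>)) = 1\<close> by simp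
    qed
    finally have le: "real K * ln q \<le> - ln 4" .
    have "q ^ K = exp (real K * ln q)" using qp by (simp add: exp_of_nat_mult)
    also have "\<dots> \<le> exp (- ln 4)" using le by simp
    also have "\<dots> = 1/4" by (simp add: exp_minus)
    finally show ?thesis unfolding q_def K_def r_def .
  qed
qed

lemma sq_tri:
  fixes u v w :: "'a::real_normed_vector"
  shows "(norm (u - w))\<^sup>2 \<le> 2 * (norm (u - v))\<^sup>2 + 2 * (norm (v - w))\<^sup>2"
proof -
  have "norm (u - w) \<le> norm (u - v) + norm (v - w)" using norm_triangle_ineq[of "u-v" "v-w"] by simp
  hence "(norm (u - w))\<^sup>2 \<le> (norm (u - v) + norm (v - w))\<^sup>2" by (simp add: power_mono)
  also have "\<dots> \<le> 2 * (norm (u - v))\<^sup>2 + 2 * (norm (v - w))\<^sup>2"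
    using sum_squares_ge_zero[of "norm (u - v) - norm (v - w)" 0]
    by (simp add: power2_eq_square algebra_simps)
  finally show ?thesis .
qed

lemma young:
  fixes g v :: "'a::real_inner"
  assumes "0 < \<alpha>"
  shows "g \<bullet> v \<le> (norm g)\<^sup>2 / (2 * \<alpha>) + \<alpha> / 2 * (norm v)\<^sup>2"
proof -
  have "0 \<le> (norm (g - \<alpha> *\<^sub>R v))\<^sup>2" by simp
  also have "\<dots> = (norm g)\<^sup>2 - 2 * \<alpha> * (g \<bullet> v) + \<alpha>^2 * (norm v)\<^sup>2"
    unfolding power2_norm_eq_inner
    by (simp add: inner_diff_left inner_diff_right inner_commute power2_eq_square algebra_simps)
  finally have "2 * \<alpha> * (g \<bullet> v) \<le> (norm g)\<^sup>2 + \<alpha>^2 * (norm v)\<^sup>2" by simp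
  thus ?thesis using assms by (simp add: field_simps power2_eq_square)
qed


lemma iter_contract:
  assumes h: "\<forall>z\<in>X. h z \<in> X \<and> (norm (h z - c))\<^sup>2 \<le> q * (norm (z - c))\<^sup>2"
    and q: "(q::real) \<ge> 0" and z: "z \<in> X"
  shows "(h^^n) z \<in> X \<and> (norm ((h^^n) z - c))\<^sup>2 \<le> q^n * (norm (z - c))\<^sup>2"
proof (induction n)
  case 0
  then show ?case using z by simp
next
  case (Suc n)
  then have i: "(h^^n) z \<in> X" and ii: "(norm ((h^^n) z - c))\<^sup>2 \<le> q^n * (norm (z - c))\<^sup>2" by auto
  have "(norm (h ((h^^n) z) - c))\<^sup>2 \<le> q * (norm ((h^^n) z - c))\<^sup>2" using h i by blast
  also have "\<dots> \<le> q * (q^n * (norm (z - c))\<^sup>2)" using ii q by (rule mult_left_mono)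
  finally show ?case using h i by simp
qed

theorem lemma4:
  fixes X :: "'a::euclidean_space set"
    and f :: "nat \<Rightarrow> 'a \<Rightarrow> real"
    and g :: "nat \<Rightarrow> 'a \<Rightarrow> 'a"
    and xs :: "nat \<Rightarrow> 'a"
    and \<mu> L \<alpha> :: real and T :: nat and x0 :: 'a
  assumes "X \<noteq> {}" and "closed X" and "convex X"
    and "0 < \<mu>" and "\<mu> \<le> L" and "1 \<le> T"
    and nonneg: "\<And>t x. t \<in> {1..T} \<Longrightarrow> x \<in> X \<Longrightarrow> 0 \<le> f t x"
    and grad: "\<And>t x. t \<in> {1..T} \<Longrightarrow> x \<in> X \<Longrightarrow>
                 (f t has_derivative (\<lambda>h. g t x \<bullet> h)) (at x within X)"
    and sc: "\<And>t x y. t \<in> {1..T} \<Longrightarrow> x \<in> X \<Longrightarrow> y \<in> X \<Longrightarrow>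
                 \<mu> / 2 * (norm (y - x))\<^sup>2 \<le> f t y - f t x - g t x \<bullet> (y - x)"
    and sm: "\<And>t x y. t \<in> {1..T} \<Longrightarrow> x \<in> X \<Longrightarrow> y \<in> X \<Longrightarrow>
                 f t y - f t x - g t x \<bullet> (y - x) \<le> L / 2 * (norm (y - x))\<^sup>2"
    and xs_in: "\<And>t. t \<in> {1..T} \<Longrightarrow> xs t \<in> X"
    and xs_min: "\<And>t y. t \<in> {1..T} \<Longrightarrow> y \<in> X \<Longrightarrow> f t (xs t) \<le> f t y"
    and "x0 \<in> X"
    and "0 < \<alpha>"
  shows "omgd_cost X L f g (nat \<lceil>(L + \<mu>) / (2 * \<mu>) * ln 4\<rceil>) x0 T
           \<le> (\<Sum>t=1..T. f t (xs t))
             + 1 / (2 * \<alpha>) * (\<Sum>t=1..T. (norm (g t (xs t)))\<^sup>2)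
             + (L + \<alpha> + 5) *
               ((norm (omgd X L g (nat \<lceil>(L + \<mu>) / (2 * \<mu>) * ln 4\<rceil>) x0 1 - xs 1))\<^sup>2
                + 2 * (\<Sum>t=2..T. (norm (xs t - xs (t - 1)))\<^sup>2))"
proof -
  define K where "K = nat \<lceil>(L + \<mu>) / (2 * \<mu>) * ln 4\<rceil>"
  define x where "x = omgd X L g K x0"
  define q where "q = (L - \<mu>) / (L + \<mu>)"
  define d where "d = (\<lambda>t. (norm (x t - xs t))\<^sup>2)"
  define D where "D = (\<lambda>t. if t = 0 then 0 else d t)"
  define p where "p = (\<lambda>t. (norm (xs t - xs (t - 1)))\<^sup>2)"
  define w where "w = (\<lambda>t. (1/2) * (norm (x t - x (t - 1)))\<^sup>2)"
  define S where "S = (\<Sum>t=1..T. d t)"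
  define P where "P = (\<Sum>t=2..T. p t)"
  have L0: "0 < L" using assms by simp
  have q0: "q \<ge> 0" unfolding q_def using assms by simp
  have qK4: "q ^ K \<le> 1/4" unfolding q_def K_def using assms(4,5) by (rule qK)
  have d0: "\<And>t. d t \<ge> 0" unfolding d_def by simp
  have D0: "\<And>t. D t \<ge> 0" unfolding D_def using d0 by simp
  have p0: "\<And>t. p t \<ge> 0" unfolding p_def by simp
  have step_in: "\<And>t z. omgd_step X L g t z \<in> X"
    by (simp add: omgd_step_def closest_point_in_set assms(1,2))
  have pow_in: "\<And>t n z. z \<in> X \<Longrightarrow> (omgd_step X L g t ^^ n) z \<in> X"
  proof -
    fix t n z assume "z \<in> X"
    then show "(omgd_step X L g t ^^ n) z \<in> X" by (induction n) (auto simp: step_in)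
  qed
  have xin: "\<And>t. x t \<in> X"
  proof -
    fix t show "x t \<in> X"
      by (induction t) (auto simp: x_def pow_in assms(13))
  qed
  have x0e: "x 0 = x0" "x 1 = x0" by (simp_all add: x_def)
  have xsuc: "\<And>t. t \<ge> 1 \<Longrightarrow> x (Suc t) = (omgd_step X L g t ^^ K) (x t)"
    by (simp add: x_def)
  have contr: "\<And>t. t \<ge> 1 \<Longrightarrow> Suc t \<le> T \<Longrightarrow> (norm (x (Suc t) - xs t))\<^sup>2 \<le> 1/4 * d t"
  proof -
    fix t assume t1: "t \<ge> 1" and tT: "Suc t \<le> T"
    have tin: "t \<in> {1..T}" using t1 tT by simp
    have h: "\<forall>z\<in>X. omgd_step X L g t z \<in> X \<and>
        (norm (omgd_step X L g t z - xs t))\<^sup>2 \<le> q * (norm (z - xs t))\<^sup>2"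
    proof
      fix z assume zX: "z \<in> X"
      show "omgd_step X L g t z \<in> X \<and>
        (norm (omgd_step X L g t z - xs t))\<^sup>2 \<le> q * (norm (z - xs t))\<^sup>2"
        unfolding omgd_step_def q_def
        using step_contract[of X \<mu> L "xs t" z "f t" "g t"] assms(1-5) xs_in[OF tin] zX
          xs_min[OF tin] sc[OF tin] sm[OF tin] by blast
    qed
    have "(norm (x (Suc t) - xs t))\<^sup>2 \<le> q ^ K * d t"
      using iter_contract[OF h q0 xin[of t], of K] xsuc[OF t1] unfolding d_def by simp
    also have "\<dots> \<le> 1/4 * d t" using qK4 d0[of t] by (rule mult_right_mono)
    finally show "(norm (x (Suc t) - xs t))\<^sup>2 \<le> 1/4 * d t" .
  qed
  have A: "\<And>t. t \<in> {2..T} \<Longrightarrow> d t \<le> 1/2 * D (t - 1) + 2 * p t"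
  proof -
    fix t assume t: "t \<in> {2..T}"
    then obtain s where s: "t = Suc s" "s \<ge> 1" "Suc s \<le> T" by (cases t) auto
    have "d t \<le> 2 * (norm (x (Suc s) - xs s))\<^sup>2 + 2 * (norm (xs s - xs (Suc s)))\<^sup>2"
      unfolding d_def s(1) by (rule sq_tri)
    also have "\<dots> \<le> 2 * (1/4 * d s) + 2 * p t"
      using contr[OF s(2,3)] unfolding p_def s(1) by (simp add: norm_minus_commute)
    finally show "d t \<le> 1/2 * D (t - 1) + 2 * p t" using s unfolding D_def by simp
  qed
  have B: "\<And>t. t \<in> {1..T} \<Longrightarrow> w t \<le> 5/4 * D (t - 1)"
  proof -
    fix t assume t: "t \<in> {1..T}"
    show "w t \<le> 5/4 * D (t - 1)"
    proof (cases "t = 1")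
      case True
      then show ?thesis using x0e D0[of 0] by (simp add: w_def)
    next
      case False
      then obtain s where s: "t = Suc s" "s \<ge> 1" "Suc s \<le> T" using t by (cases t) auto
      have "(norm (x (Suc s) - x s))\<^sup>2 \<le> 2 * (norm (x (Suc s) - xs s))\<^sup>2 + 2 * (norm (xs s - x s))\<^sup>2"
        by (rule sq_tri)
      also have "\<dots> \<le> 2 * (1/4 * d s) + 2 * d s"
        using contr[OF s(2,3)] unfolding d_def by (simp add: norm_minus_commute)
      finally show ?thesis using s unfolding D_def w_def by simp
    qed
  qed
  have C: "\<And>t. t \<in> {1..T} \<Longrightarrow> f t (x t) \<le> f t (xs t) + 1 / (2 * \<alpha>) * (norm (g t (xs t)))\<^sup>2 + (\<alpha> + L) / 2 * d t"
  proof -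
    fix t assume t: "t \<in> {1..T}"
    have "f t (x t) - f t (xs t) - g t (xs t) \<bullet> (x t - xs t) \<le> L / 2 * d t"
      using sm[OF t xs_in[OF t] xin[of t]] unfolding d_def .
    moreover have "g t (xs t) \<bullet> (x t - xs t) \<le> (norm (g t (xs t)))\<^sup>2 / (2 * \<alpha>) + \<alpha> / 2 * d t"
      unfolding d_def using assms(14) by (rule young)
    ultimately show "f t (x t) \<le> f t (xs t) + 1 / (2 * \<alpha>) * (norm (g t (xs t)))\<^sup>2 + (\<alpha> + L) / 2 * d t"
      by (simp add: field_simps)
  qed
  obtain m where m: "T = Suc m" using assms(6) by (cases T) auto
  have SD: "(\<Sum>t=1..T. D (t - 1)) \<le> S"
  proof -
    have "(\<Sum>t=1..T. D (t - 1)) = (\<Sum>t=0..m. D t)"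
      unfolding m using sum.shift_bounds_cl_Suc_ivl[of "\<lambda>t. D (t - 1)" 0 m] by simp
    also have "\<dots> = D 0 + (\<Sum>t=1..m. D t)" by (simp add: sum.atLeast_Suc_atMost)
    also have "\<dots> = (\<Sum>t=1..m. d t)" by (simp add: D_def)
    also have "\<dots> \<le> S" unfolding S_def m using d0 by simp
    finally show ?thesis .
  qed
  have S1: "S = d 1 + (\<Sum>t=2..T. d t)"
    unfolding S_def using assms(6) by (simp add: sum.atLeast_Suc_atMost numeral_2_eq_2)
  have "(\<Sum>t=2..T. d t) \<le> (\<Sum>t=2..T. 1/2 * D (t - 1) + 2 * p t)"
    using A by (rule sum_mono)
  also have "\<dots> = 1/2 * (\<Sum>t=2..T. D (t - 1)) + 2 * P"
    by (simp add: sum.distrib sum_distrib_left P_def)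
  also have "(\<Sum>t=2..T. D (t - 1)) \<le> (\<Sum>t=1..T. D (t - 1))"
    by (rule sum_mono2) (auto simp: D0)
  finally have S2: "S \<le> 2 * d 1 + 4 * P" using SD S1 by linarith
  have W: "(\<Sum>t=1..T. w t) \<le> 5/4 * S"
  proof -
    have "(\<Sum>t=1..T. w t) \<le> (\<Sum>t=1..T. 5/4 * D (t - 1))" using B by (rule sum_mono)
    also have "\<dots> = 5/4 * (\<Sum>t=1..T. D (t - 1))" by (simp add: sum_distrib_left)
    finally show ?thesis using SD by linarith
  qed
  have F: "(\<Sum>t=1..T. f t (x t)) \<le> (\<Sum>t=1..T. f t (xs t)) + 1 / (2 * \<alpha>) * (\<Sum>t=1..T. (norm (g t (xs t)))\<^sup>2) + (\<alpha> + L) / 2 * S"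
  proof -
    have "(\<Sum>t=1..T. f t (x t)) \<le> (\<Sum>t=1..T. f t (xs t) + 1 / (2 * \<alpha>) * (norm (g t (xs t)))\<^sup>2 + (\<alpha> + L) / 2 * d t)"
      using C by (rule sum_mono)
    also have "\<dots> = (\<Sum>t=1..T. f t (xs t)) + 1 / (2 * \<alpha>) * (\<Sum>t=1..T. (norm (g t (xs t)))\<^sup>2) + (\<alpha> + L) / 2 * S"
      by (simp add: sum.distrib sum_distrib_left S_def)
    finally show ?thesis .
  qed
  have cost: "omgd_cost X L f g K x0 T = (\<Sum>t=1..T. f t (x t)) + (\<Sum>t=1..T. w t)"
    by (simp add: omgd_cost_def sum.distrib x_def w_def)
  have P0: "P \<ge> 0" unfolding P_def using p0 by (simp add: sum_nonneg)
  have S0: "S \<ge> 0" unfolding S_def using d0 by (simp add: sum_nonneg)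
  have coef: "((\<alpha> + L) / 2 + 5/4) * S \<le> ((\<alpha> + L) / 2 + 5/4) * (2 * d 1 + 4 * P)"
    using S2 assms(4,5,14) by (intro mult_left_mono) auto
  have fin: "((\<alpha> + L) / 2 + 5/4) * (2 * d 1 + 4 * P) \<le> (L + \<alpha> + 5) * (d 1 + 2 * P)"
  proof -
    have e1: "((\<alpha> + L) / 2 + 5/4) * (2 * d 1 + 4 * P) = (\<alpha> + L) * (d 1 + 2 * P) + 5/2 * d 1 + 5 * P"
      by (simp add: field_simps)
    have e2: "(L + \<alpha> + 5) * (d 1 + 2 * P) = (\<alpha> + L) * (d 1 + 2 * P) + 5 * d 1 + 10 * P"
      by (simp add: algebra_simps)
    show ?thesis unfolding e1 e2 using d0[of 1] P0 by linarith
  qed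
  have "omgd_cost X L f g K x0 T \<le> (\<Sum>t=1..T. f t (xs t)) + 1 / (2 * \<alpha>) * (\<Sum>t=1..T. (norm (g t (xs t)))\<^sup>2)
       + (L + \<alpha> + 5) * (d 1 + 2 * P)"
    using cost F W coef fin by (simp add: algebra_simps)
  then show ?thesis unfolding K_def[symmetric] d_def x_def P_def p_def by simp
qed

end
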